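(* Fix $\vartheta_1\in(0,\pi/2)$. The function $\Phi$ is increasing on $[\vartheta_1,\pi/2]$, with $\Phi(\vartheta_1)=0$ and $\Phi(\pi/2)=\frac{\pi}{2}(1-\cos\vartheta_1)$.
   Context: For integers $k\ge0$ let $I_k=[\vartheta_1+k\pi,(k+1)\pi-\vartheta_1]$ (so $|\sin\eta|\ge\sin\vartheta_1$ on $I_k$). For $\eta\in I_k$ set $\gamma(\eta)=\sqrt{1-\sin^2\vartheta_1/\sin^2\eta}\in[0,1)$ and $$\Phi(\eta)=-\eta\,\gamma(\eta)+k\pi+\arccos\Big(\frac{\cos(\eta-k\pi)}{\cos\vartheta_1}\Big),\qquad \arccos\in[0,\pi].$$ *)

theory Defs
  imports "HOL-Analysis.Analysis"
begin

definition gamma_fn :: "real \<Rightarrow> real \<Rightarrow> real" where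
  "gamma_fn th1 eta = sqrt (1 - (sin th1)^2 / (sin eta)^2)"

text \<open>Phi on the interval I_k (k is the index of the interval containing eta).\<close>
definition Phi :: "real \<Rightarrow> nat \<Rightarrow> real \<Rightarrow> real" where
  "Phi th1 k eta = - eta * gamma_fn th1 eta + real k * pi
     + arccos (cos (eta - real k * pi) / cos th1)"

end

theory Submission
  imports Defs
begin
lemma deriv_f:
  fixes x t :: real
  assumes sx: "sin x > sin t" and st: "sin t > 0" and cx: "cos x > 0" and ct: "cos x < cos t"
  shows "((\<lambda>x. -x * sqrt(1 - (sin t)^2/(sin x)^2) + arccos(cos x / cos t)) has_real_derivative
     (sin t)^2 / ((sin x)^2 * sqrt(1 - (sin t)^2/(sin x)^2)) * (1 - x * cos x / sin x)) (at x)"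
proof -
  define s where "s = sin t"
  define c where "c = cos t"
  define g where "g = sqrt(1 - s^2/(sin x)^2)"
  have c0: "c > 0" using cx ct c_def by linarith
  have sx0: "sin x > 0" using sx st by linarith
  have s2: "s^2 < (sin x)^2" using sx st s_def by (simp add: power_strict_mono)
  have g2: "g^2 = 1 - s^2/(sin x)^2" unfolding g_def
    using s2 sx0 by (simp add: field_simps)
  have gpos: "g > 0" unfolding g_def using s2 sx0 by (simp add: field_simps)
  have cs: "c^2 = 1 - s^2" "(cos x)^2 = 1 - (sin x)^2" unfolding c_def s_def
    by (simp_all add: cos_squared_eq)
  have hq: "sqrt (1 - (cos x / c)^2) = g * sin x / c"
  proof (rule real_sqrt_unique)
    show "(g * sin x / c)^2 = 1 - (cos x / c)^2"
      using g2 cs c0 sx0 apply (simp add: field_simps power_mult_distrib)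
      using sin_cos_squared_add[of x] by linarith
    show "0 \<le> g * sin x / c" using gpos sx0 c0 by simp
  qed
  have r1: "- 1 < cos x / c" using cx c0 by (smt (verit) divide_pos_pos)
  have r2: "cos x / c < 1" using ct c0 c_def by (simp add: field_simps)
  have d1: "((\<lambda>x. 1 - s^2/(sin x)^2) has_real_derivative (s^2 * 2 * sin x * cos x / (sin x)^4)) (at x)"
    apply (rule derivative_eq_intros refl)+
    using sx0 apply simp
     apply (rule refl)
    using sx0 by (simp add: field_simps power_def)
  have d2: "((\<lambda>x. sqrt (1 - s^2/(sin x)^2)) has_real_derivative (inverse g / 2 * (s^2 * 2 * sin x * cos x / (sin x)^4))) (at x)"
    using DERIV_chain2[OF DERIV_real_sqrt d1] g2 gpos unfolding g_def by simp
  have d3: "((\<lambda>x. arccos (cos x / c)) has_real_derivative (inverse (- sqrt (1 - (cos x / c)^2)) * (- sin x / c))) (at x)"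
    apply (rule DERIV_chain2[OF DERIV_arccos])
    using r1 r2 apply auto[2]
    apply (rule derivative_eq_intros refl)+
    using c0 by simp_all
  have d4: "((\<lambda>x. -x * sqrt(1 - s^2/(sin x)^2) + arccos(cos x / c)) has_real_derivative
     (-1 * g + (inverse g / 2 * (s^2 * 2 * sin x * cos x / (sin x)^4)) * (-x) + inverse (- sqrt (1 - (cos x / c)^2)) * (- sin x / c))) (at x)"
    using DERIV_add[OF DERIV_mult[OF DERIV_minus[OF DERIV_ident] d2] d3] unfolding g_def by simp
  have eq: "-1 * g + (inverse g / 2 * (s^2 * 2 * sin x * cos x / (sin x)^4)) * (-x) + inverse (- sqrt (1 - (cos x / c)^2)) * (- sin x / c)
     = s^2 / ((sin x)^2 * g) * (1 - x * cos x / sin x)"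
    unfolding hq using gpos sx0 c0 g2 apply (simp add: field_simps power_def)
    by algebra
  have "((\<lambda>x. -x * sqrt(1 - s^2/(sin x)^2) + arccos(cos x / c)) has_real_derivative
     s^2 / ((sin x)^2 * g) * (1 - x * cos x / sin x)) (at x)" using d4 unfolding eq .
  then show ?thesis unfolding s_def c_def g_def .
qed

lemma x_cos_lt_sin:
  fixes x :: real assumes "0 < x" "x < pi/2"
  shows "x * cos x < sin x"
proof -
  have "(\<lambda>y. sin y - y * cos y) 0 < (\<lambda>y. sin y - y * cos y) x"
  proof (rule DERIV_pos_imp_increasing_open[OF assms(1)])
    fix y :: real assume y: "0 < y" "y < x"
    show "\<exists>d. ((\<lambda>y. sin y - y * cos y) has_real_derivative d) (at y) \<and> d > 0"
    proof (intro exI conjI)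
      show "((\<lambda>y. sin y - y * cos y) has_real_derivative y * sin y) (at y)"
        by (rule derivative_eq_intros refl | simp)+
      show "y * sin y > 0" using y assms by (simp add: sin_gt_zero)
    qed
  next
    show "continuous_on {0..x} (\<lambda>y. sin y - y * cos y)" by (intro continuous_intros)
  qed
  then show ?thesis by simp
qed

theorem lemma5p7:
  fixes th1 :: real
  assumes "0 < th1" and "th1 < pi / 2"
  shows "strict_mono_on {th1..pi/2} (Phi th1 0)
    \<and> Phi th1 0 th1 = 0
    \<and> Phi th1 0 (pi/2) = pi / 2 * (1 - cos th1)"
proof (intro conjI)
  define f where "f = (\<lambda>x. -x * sqrt(1 - (sin th1)^2/(sin x)^2) + arccos(cos x / cos th1))"
  have Pf: "Phi th1 0 = f" unfolding f_def Phi_def gamma_fn_def by (rule ext) simp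
  have st: "sin th1 > 0" using assms by (simp add: sin_gt_zero)
  have ct: "cos th1 > 0" using assms by (simp add: cos_gt_zero_pi)
  show "strict_mono_on {th1..pi/2} (Phi th1 0)"
    unfolding Pf
  proof (rule strict_mono_onI)
    fix a b assume ab1: "a \<in> {th1..pi/2}" and ab2: "b \<in> {th1..pi/2}" and ab3: "a < b"
    have ab: "a \<in> {th1..pi/2} \<and> b \<in> {th1..pi/2} \<and> a < b" using ab1 ab2 ab3 by simp
    show "f a < f b"
    proof (rule DERIV_pos_imp_increasing_open[of a b f])
      show "a < b" using ab by simp
    next
      fix x assume x: "a < x" "x < b"
      have x1: "th1 < x" "x < pi/2" using ab x by auto
      have sx: "sin x > sin th1" using x1 assms by (subst sin_mono_less_eq) auto
      have cx: "cos x > 0" using x1 assms by (simp add: cos_gt_zero_pi)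
      have cxt: "cos x < cos th1" using x1 assms by (intro cos_monotone_0_pi) auto
      have sx0: "sin x > 0" using sx st by linarith
      have s2: "(sin th1)^2 < (sin x)^2" using sx st by (simp add: power_strict_mono)
      have gpos: "sqrt(1 - (sin th1)^2/(sin x)^2) > 0" using s2 sx0 by (simp add: field_simps)
      have q: "1 - x * cos x / sin x > 0" using x_cos_lt_sin[of x] x1 assms sx0 by (simp add: field_simps)
      show "\<exists>y. (f has_real_derivative y) (at x) \<and> y > 0"
        unfolding f_def
        apply (rule exI, rule conjI, rule deriv_f[OF sx st cx cxt])
        using st sx0 gpos q by simp
    next
      have sub: "{a..b} \<subseteq> {th1..pi/2}" using ab by auto
      have h: "\<forall>y\<in>{th1..pi/2}. sin y \<noteq> 0 \<and> -1 \<le> cos y / cos th1 \<and> cos y / cos th1 \<le> 1"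
      proof
        fix y assume y: "y \<in> {th1..pi/2}"
        have sy: "sin y > 0" using y assms by (intro sin_gt_zero) auto
        have c1: "cos y \<ge> 0" using y assms by (intro cos_ge_zero) auto
        have c2: "cos y \<le> cos th1" using y assms by (intro cos_monotone_0_pi_le) auto
        have "-1 \<le> cos y / cos th1" using c1 ct by (smt (verit) divide_nonneg_pos)
        moreover have "cos y / cos th1 \<le> 1" using c2 ct by simp
        ultimately show "sin y \<noteq> 0 \<and> -1 \<le> cos y / cos th1 \<and> cos y / cos th1 \<le> 1" using sy by simp
      qed
      have "continuous_on {th1..pi/2} f"
        unfolding f_def using h ct by (auto intro!: continuous_intros)
      then show "continuous_on {a..b} f" using sub continuous_on_subset by blast
    qed
  qed
  show "Phi th1 0 th1 = 0" unfolding Pf f_def using st ct by simp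
  have cs: "sqrt (1 - (sin th1)^2) = cos th1"
    using ct by (simp add: cos_squared_eq[symmetric])
  show "Phi th1 0 (pi/2) = pi / 2 * (1 - cos th1)" unfolding Pf f_def using cs
    by (simp add: algebra_simps)
qed
end
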